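(* Let $n\ge2$, $A\in\mathbb{R}^{n\times m}$, $B\in\mathbb{R}^{m\times n}$, and let $W$ be a cycle in $G_{A,B}$ with vertex sequence $(S_{i_1},R_{j_1},\dots,S_{i_N},R_{j_N},S_{i_1})$. (i) A cycle $C$ in $G^{[2]}_{A,B}$ is an external lifting of $W$ if and only if there exists $p\notin\{i_1,\dots,i_N\}$ such that $C=(i_1p,\,j_1^p,\,i_2p,\,j_2^p,\dots,i_Np,\,j_N^p,\,i_1p)$. (ii) If $C$ is an internal lifting of $W$, then every S-vertex of $C$ is of the form $ab$ with $a,b\in\{i_1,\dots,i_N\}$.
   Context: DSR graphs: for $A\in\mathbb{R}^{n\times m}$, $B\in\mathbb{R}^{m\times n}$, $G_{A,B}$ is the signed bipartite digraph with S-vertices $S_1,\dots,S_n$ and R-vertices $R_1,\dots,R_m$, an arc $R_j\to S_i$ of sign $\mathrm{sign}(A_{ij})$ iff $A_{ij}\ne0$, an arc $S_i\to R_j$ of sign $\mathrm{sign}(B_{ji})$ iff $B_{ji}\ne0$, with antiparallel arcs of equal sign merged into an undirected edge. Walks traverse edges consistently with orientation (empty walks allowed); a cycle is a nonempty closed walk with no repeated vertex except first$=$last. DSR$^{[2]}$ graph: $\overline{\mathbf L}^A\in\mathbb{R}^{\binom n2\times mn}$ has rows indexed by $(i,j)$, $i<j$, columns by $(k,l)$, $1\le k\le m$, $1\le l\le n$, entries $A_{jk}$ if $l=i$, $-A_{ik}$ if $l=j$, $0$ otherwise; $\underline{\mathbf L}^B\in\mathbb{R}^{mn\times\binom n2}$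 has $(k,l),(i,j)$ entry $B_{kj}$ if $l=i$, $-B_{ki}$ if $l=j$, $0$ otherwise. $G^{[2]}_{A,B}:=G_{\overline{\mathbf L}^A,\underline{\mathbf L}^B}$, with S-vertices $ij=ji$ ($i\ne j$) and R-vertices $k^l$; an edge $(ij,k^l)$ exists only if $l\in\{i,j\}$. The projection $\pi$ sends an edge $(ij,k^j)$ to the edge $(S_i,R_k)$ of $G_{A,B}$. Direct/twisted and $\pi(C)$ for a cycle $C$ of $G^{[2]}_{A,B}$: let $C$ have S-vertex sequence $a_1b_1,\dots,a_{T+1}b_{T+1}=a_1b_1$, and write the segment from $a_rb_r$ to $a_{r+1}b_{r+1}$ as $(a_rb_r,k^l,a_{r+1}b_{r+1})$ with $l$ the common index; its projection is a length-2 walk from $S_x$ to $S_y$, with $x$ the element of $\{a_r,b_r\}$ other than $l$ and $y$ that of $\{a_{r+1},b_{r+1}\}$ other than $l$. Starting from empty walks at $S_{a_1}$ and $S_{b_1}$, for $r=1,\dots,T$ append the projected segment to whichever current walk ends at $S_x$. If the final walks $W',W''$ are both closed, $C$ is direct and $\pi(C)=\{W',W''\}$; otherwise $C$ is twisted and $\pi(C)=W'\sqcup W''$ (the closed walk traversing $W'$ then $W''$). Liftings: a cycle $C$ of $G^{[2]}_{A,B}$ is a lifting of the cycle $W$ of $G_{A,B}$ if it projects to $W$ (up to choice of starting vertex), i.e. either $C$ is twisted and $\pi(C)=W$, in which case $C$ is an internal lifting of $W$; or $C$ is direct with $\pi(C)=\{W',W''\}$ where one of $W',W''$ is empty and the other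 is $W$, in which case $C$ is an external lifting of $W$. *)

theory Defs
  imports Complex_Main
begin

text \<open>Matrices are functions nat => nat => real; indices are 0-based:
  A (n x m) has entries A i k with i < n, k < m; B (m x n) has entries B k i.
  S-vertices of G_{A,B} are indices i < n, R-vertices indices k < m.
  S-vertices of the DSR^[2] graph are pairs (i,j) with i < j < n (the unordered pair ij),
  R-vertices k^l are pairs (k,l) with k < m, l < n.
  A cycle (s_1, r_1, s_2, r_2, ..., s_N, r_N, s_1) in a DSR-type bipartite graph is
  represented by the list [(s_1,r_1), ..., (s_N,r_N)].\<close>

definition LbarA :: "(nat \<Rightarrow> nat \<Rightarrow> real) \<Rightarrow> nat \<times> nat \<Rightarrow> nat \<times> nat \<Rightarrow> real" where
  "LbarA A ij kl = (case ij of (i, j) \<Rightarrow> case kl of (k, l) \<Rightarrow>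
      if l = i then A j k else if l = j then - A i k else 0)"

definition LunderB :: "(nat \<Rightarrow> nat \<Rightarrow> real) \<Rightarrow> nat \<times> nat \<Rightarrow> nat \<times> nat \<Rightarrow> real" where
  "LunderB B kl ij = (case kl of (k, l) \<Rightarrow> case ij of (i, j) \<Rightarrow>
      if l = i then B k j else if l = j then - B k i else 0)"

text \<open>Generic cycle in a DSR-type bipartite digraph: SV/RV are the vertex sets,
  SR s r: an arc (or undirected edge) can be traversed from s to r; RS r s likewise.
  A walk is determined by its vertex sequence since between two vertices there is at
  most one arc/edge usable in a given direction.\<close>
definition is_dsr_cycle ::
  "('s \<Rightarrow> bool) \<Rightarrow> ('r \<Rightarrow> bool) \<Rightarrow> ('s \<Rightarrow> 'r \<Rightarrow> bool) \<Rightarrow> ('r \<Rightarrow> 's \<Rightarrow> bool)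
     \<Rightarrow> ('s \<times> 'r) list \<Rightarrow> bool" where
  "is_dsr_cycle SV RV SR RS c \<longleftrightarrow> c \<noteq> [] \<and> distinct (map fst c) \<and> distinct (map snd c) \<and>
     (\<forall>t < length c. SV (fst (c ! t)) \<and> RV (snd (c ! t)) \<and>
        SR (fst (c ! t)) (snd (c ! t)) \<and>
        RS (snd (c ! t)) (fst (c ! ((t + 1) mod length c))))"

text \<open>Cycles of G_{A,B}: arc S_i -> R_k iff B k i \<noteq> 0, arc R_k -> S_i iff A i k \<noteq> 0.\<close>
definition dsr_cycle :: "nat \<Rightarrow> nat \<Rightarrow> (nat \<Rightarrow> nat \<Rightarrow> real) \<Rightarrow> (nat \<Rightarrow> nat \<Rightarrow> real)
     \<Rightarrow> (nat \<times> nat) list \<Rightarrow> bool" where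
  "dsr_cycle n m A B W = is_dsr_cycle (\<lambda>i. i < n) (\<lambda>k. k < m)
       (\<lambda>i k. B k i \<noteq> 0) (\<lambda>k i. A i k \<noteq> 0) W"

text \<open>Cycles of the DSR^[2] graph G^[2]_{A,B} = G_{LbarA, LunderB}.\<close>
definition dsr2_cycle :: "nat \<Rightarrow> nat \<Rightarrow> (nat \<Rightarrow> nat \<Rightarrow> real) \<Rightarrow> (nat \<Rightarrow> nat \<Rightarrow> real)
     \<Rightarrow> ((nat \<times> nat) \<times> (nat \<times> nat)) list \<Rightarrow> bool" where
  "dsr2_cycle n m A B C = is_dsr_cycle (\<lambda>(i, j). i < j \<and> j < n) (\<lambda>(k, l). k < m \<and> l < n)
       (\<lambda>s r. LunderB B r s \<noteq> 0) (\<lambda>r s. LbarA A s r \<noteq> 0) C"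

text \<open>The S-vertex ij = ji of the DSR^[2] graph, normalised.\<close>
definition spair :: "nat \<Rightarrow> nat \<Rightarrow> nat \<times> nat" where
  "spair i j = (min i j, max i j)"

text \<open>Walks in G_{A,B} from an S-vertex to an S-vertex: (start, steps, end), where each step
  (x,k) is the pair S_x, R_k traversed (followed by the next S-vertex).\<close>
type_synonym walk = "nat \<times> (nat \<times> nat) list \<times> nat"

definition wstart :: "walk \<Rightarrow> nat" where "wstart w = fst w"
definition wsteps :: "walk \<Rightarrow> (nat \<times> nat) list" where "wsteps w = fst (snd w)"
definition wend :: "walk \<Rightarrow> nat" where "wend w = snd (snd w)"
definition wclosed :: "walk \<Rightarrow> bool" where "wclosed w \<longleftrightarrow> wstart w = wend w"

definition wappend :: "walk \<Rightarrow> nat \<Rightarrow> nat \<Rightarrow> nat \<Rightarrow> walk" where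
  "wappend w x k y = (wstart w, wsteps w @ [(x, k)], y)"

definition other :: "nat \<times> nat \<Rightarrow> nat \<Rightarrow> nat" where
  "other s l = (if l = fst s then snd s else fst s)"

definition proj_step :: "walk \<times> walk \<Rightarrow> (nat \<times> nat) \<times> (nat \<times> nat) \<times> (nat \<times> nat) \<Rightarrow> walk \<times> walk" where
  "proj_step ws seg = (case seg of (s, (k, l), s') \<Rightarrow>
      (let x = other s l; y = other s' l in
        if wend (fst ws) = x then (wappend (fst ws) x k y, snd ws)
        else (fst ws, wappend (snd ws) x k y)))"

definition segments :: "((nat \<times> nat) \<times> (nat \<times> nat)) list \<Rightarrow> ((nat \<times> nat) \<times> (nat \<times> nat) \<times> (nat \<times> nat)) list" where
  "segments C = map (\<lambda>t. (fst (C ! t), snd (C ! t), fst (C ! ((t + 1) mod length C)))) [0..<length C]"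

definition proj_walks :: "((nat \<times> nat) \<times> (nat \<times> nat)) list \<Rightarrow> walk \<times> walk" where
  "proj_walks C = (let s = fst (hd C) in
     foldl proj_step ((fst s, [], fst s), (snd s, [], snd s)) (segments C))"

definition is_direct :: "((nat \<times> nat) \<times> (nat \<times> nat)) list \<Rightarrow> bool" where
  "is_direct C \<longleftrightarrow> wclosed (fst (proj_walks C)) \<and> wclosed (snd (proj_walks C))"

text \<open>Equality of closed walks up to choice of starting vertex.\<close>
definition same_cycle :: "'a list \<Rightarrow> 'a list \<Rightarrow> bool" where
  "same_cycle xs ys \<longleftrightarrow> (\<exists>r. xs = rotate r ys)"

definition external_lifting :: "((nat \<times> nat) \<times> (nat \<times> nat)) list \<Rightarrow> (nat \<times> nat) list \<Rightarrow> bool" where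
  "external_lifting C W \<longleftrightarrow> is_direct C \<and>
     ((wsteps (fst (proj_walks C)) = [] \<and> same_cycle (wsteps (snd (proj_walks C))) W) \<or>
      (wsteps (snd (proj_walks C)) = [] \<and> same_cycle (wsteps (fst (proj_walks C))) W))"

text \<open>Twisted case: pi(C) = W' followed by W''.\<close>
definition internal_lifting :: "((nat \<times> nat) \<times> (nat \<times> nat)) list \<Rightarrow> (nat \<times> nat) list \<Rightarrow> bool" where
  "internal_lifting C W \<longleftrightarrow> \<not> is_direct C \<and>
     same_cycle (wsteps (fst (proj_walks C)) @ wsteps (snd (proj_walks C))) W"

end

theory Submission
  imports Defs
begin

lemma other_props:
  assumes "fst s < snd s" "l = fst s \<or> l = snd s"
  shows "other s l \<noteq> l" "{other s l, l} = {fst s, snd s}"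
  using assms by (auto simp: other_def)

lemma walk_simps[simp]:
  "wstart (a,b,c) = a" "wsteps (a,b,c) = b" "wend (a,b,c) = c"
  "wstart (wappend w x k y) = wstart w" "wsteps (wappend w x k y) = wsteps w @ [(x,k)]"
  "wend (wappend w x k y) = y"
  by (simp_all add: wstart_def wsteps_def wend_def wappend_def)

lemma other_spair: "i \<noteq> p \<Longrightarrow> other (spair i p) p = i"
  by (auto simp: other_def spair_def min_def max_def)

locale c2 =
  fixes n m :: nat and A B :: "nat \<Rightarrow> nat \<Rightarrow> real" and C :: "((nat \<times> nat) \<times> (nat \<times> nat)) list"
  assumes cyc: "dsr2_cycle n m A B C"
begin

abbreviation "N \<equiv> length C"
definition "S t = fst (C ! t)"
definition "K t = fst (snd (C ! t))"
definition "L t = snd (snd (C ! t))"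
definition "X t = other (S t) (L t)"
definition "Y t = other (S ((t+1) mod N)) (L t)"
definition "a1 = fst (S 0)"
definition "b1 = snd (S 0)"
definition "st t = foldl proj_step ((a1,[],a1),(b1,[],b1)) (take t (segments C))"

lemma N_pos: "N > 0" using cyc by (auto simp: dsr2_cycle_def is_dsr_cycle_def)

lemma facts:
  assumes "t < N"
  shows "fst (S t) < snd (S t)" "snd (S t) < n" "K t < m" "L t < n"
    "L t = fst (S t) \<or> L t = snd (S t)"
    "L t = fst (S ((t+1) mod N)) \<or> L t = snd (S ((t+1) mod N))"
proof -
  have H: "(case S t of (i,j) \<Rightarrow> i<j \<and> j<n) \<and> (case snd (C!t) of (k,l) \<Rightarrow> k<m \<and> l<n) \<and>
     LunderB B (snd (C!t)) (S t) \<noteq> 0 \<and> LbarA A (S ((t+1) mod N)) (snd (C!t)) \<noteq> 0"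
    using cyc assms by (auto simp: dsr2_cycle_def is_dsr_cycle_def S_def)
  obtain i j where s: "S t = (i,j)" by (cases "S t")
  obtain k l where r: "snd (C!t) = (k,l)" by (cases "snd (C!t)")
  obtain i' j' where s': "S ((t+1) mod N) = (i',j')" by fastforce
  show "fst (S t) < snd (S t)" "snd (S t) < n" "K t < m" "L t < n"
    "L t = fst (S t) \<or> L t = snd (S t)"
    "L t = fst (S ((t+1) mod N)) \<or> L t = snd (S ((t+1) mod N))"
    using H s r s' by (auto simp: LunderB_def LbarA_def K_def L_def split: if_splits)
qed

lemma facts2:
  assumes "t < N"
  shows "X t \<noteq> L t" "{X t, L t} = {fst (S t), snd (S t)}"
    "Y t \<noteq> L t" "{Y t, L t} = {fst (S ((t+1) mod N)), snd (S ((t+1) mod N))}"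
proof -
  have nx: "(t+1) mod N < N" using N_pos by simp
  show "X t \<noteq> L t" "{X t, L t} = {fst (S t), snd (S t)}"
    unfolding X_def using other_props facts(1,5) assms by blast+
  show "Y t \<noteq> L t" "{Y t, L t} = {fst (S ((t+1) mod N)), snd (S ((t+1) mod N))}"
    unfolding Y_def using other_props[OF facts(1)[OF nx] facts(6)[OF assms]] by blast+
qed

lemma seg_nth: "t < N \<Longrightarrow> segments C ! t = (S t, (K t, L t), S ((t+1) mod N))"
  by (simp add: segments_def S_def K_def L_def)

lemma seg_len: "length (segments C) = N" by (simp add: segments_def)

lemma st0: "st 0 = ((a1,[],a1),(b1,[],b1))" by (simp add: st_def)

lemma st_Suc: "t < N \<Longrightarrow> st (Suc t) = (if wend (fst (st t)) = X t
   then (wappend (fst (st t)) (X t) (K t) (Y t), snd (st t))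
   else (fst (st t), wappend (snd (st t)) (X t) (K t) (Y t)))"
  by (simp add: st_def take_Suc_conv_app_nth seg_len seg_nth proj_step_def X_def Y_def Let_def)

lemma stN: "proj_walks C = st N"
proof -
  have "fst (hd C) = S 0" using N_pos by (simp add: hd_conv_nth S_def)
  then show ?thesis by (simp add: proj_walks_def st_def seg_len a1_def b1_def Let_def)
qed

lemma ends: "t \<le> N \<Longrightarrow> wend (fst (st t)) \<noteq> wend (snd (st t)) \<and>
   {wend (fst (st t)), wend (snd (st t))} = {fst (S (t mod N)), snd (S (t mod N))}"
proof (induction t)
  case 0
  then show ?case using facts(1)[OF N_pos] by (auto simp: st0 a1_def b1_def)
next
  case (Suc t)
  then have t: "t < N" by simp
  have IH: "wend (fst (st t)) \<noteq> wend (snd (st t))"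
     "{wend (fst (st t)), wend (snd (st t))} = {X t, L t}"
    using Suc facts2[OF t] t by auto
  have M: "Suc t mod N = (t+1) mod N" by simp
  show ?case using IH facts2[OF t] unfolding st_Suc[OF t] M
    by (auto simp: doubleton_eq_iff)
qed

lemma starts: "t \<le> N \<Longrightarrow> wstart (fst (st t)) = a1 \<and> wstart (snd (st t)) = b1"
  by (induction t) (auto simp: st0 st_Suc)

lemma xset: "t \<le> N \<Longrightarrow> set (map fst (wsteps (fst (st t)))) \<union> set (map fst (wsteps (snd (st t)))) = X ` {..<t}"
  by (induction t) (auto simp: st0 st_Suc lessThan_Suc)

lemma L1: "t \<le> N \<Longrightarrow> ((\<forall>t'<t. L t' = a1) \<longleftrightarrow> wsteps (fst (st t)) = []) \<and>
   ((\<forall>t'<t. L t' = a1) \<longrightarrow> fst (st t) = (a1,[],a1) \<and> wsteps (snd (st t)) = map (\<lambda>t'. (X t', K t')) [0..<t])"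
proof (induction t)
  case 0
  then show ?case by (simp add: st0)
next
  case (Suc t)
  then have t: "t < N" and IH: "((\<forall>t'<t. L t' = a1) \<longleftrightarrow> wsteps (fst (st t)) = []) \<and>
   ((\<forall>t'<t. L t' = a1) \<longrightarrow> fst (st t) = (a1,[],a1) \<and> wsteps (snd (st t)) = map (\<lambda>t'. (X t', K t')) [0..<t])" by auto
  have P: "(\<forall>t'<Suc t. L t' = a1) \<longleftrightarrow> (\<forall>t'<t. L t' = a1) \<and> L t = a1" using less_Suc_eq by auto
  have E: "{wend (fst (st t)), wend (snd (st t))} = {X t, L t}"
    using ends[of t] t facts2[OF t] by auto
  show ?case
  proof (cases "wend (fst (st t)) = X t")
    case True
    have "\<not> (\<forall>t'<Suc t. L t' = a1)"
    proof
      assume "\<forall>t'<Suc t. L t' = a1"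
      then have "fst (st t) = (a1,[],a1)" "L t = a1" using IH P by auto
      then show False using True facts2(1)[OF t] by simp
    qed
    then show ?thesis using True by (auto simp: st_Suc[OF t])
  next
    case False
    have "(\<forall>t'<Suc t. L t' = a1) \<longleftrightarrow> wsteps (fst (st t)) = []"
    proof
      assume "wsteps (fst (st t)) = []"
      then have "(\<forall>t'<t. L t' = a1)" "fst (st t) = (a1,[],a1)" using IH by auto
      moreover then have "L t = a1" using False E by (auto simp: doubleton_eq_iff)
      ultimately show "\<forall>t'<Suc t. L t' = a1" using P by auto
    qed (use IH P in auto)
    moreover have "st (Suc t) = (fst (st t), wappend (snd (st t)) (X t) (K t) (Y t))"
      using False by (simp add: st_Suc[OF t])
    ultimately show ?thesis using IH P by simp
  qed
qed

lemma L2: "t \<le> N \<Longrightarrow> ((\<forall>t'<t. L t' = b1) \<longleftrightarrow> wsteps (snd (st t)) = []) \<and>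
   ((\<forall>t'<t. L t' = b1) \<longrightarrow> snd (st t) = (b1,[],b1) \<and> wsteps (fst (st t)) = map (\<lambda>t'. (X t', K t')) [0..<t])"
proof (induction t)
  case 0
  then show ?case by (simp add: st0)
next
  case (Suc t)
  then have t: "t < N" and IH: "((\<forall>t'<t. L t' = b1) \<longleftrightarrow> wsteps (snd (st t)) = []) \<and>
   ((\<forall>t'<t. L t' = b1) \<longrightarrow> snd (st t) = (b1,[],b1) \<and> wsteps (fst (st t)) = map (\<lambda>t'. (X t', K t')) [0..<t])" by auto
  have P: "(\<forall>t'<Suc t. L t' = b1) \<longleftrightarrow> (\<forall>t'<t. L t' = b1) \<and> L t = b1" using less_Suc_eq by auto
  have E: "{wend (fst (st t)), wend (snd (st t))} = {X t, L t}" "wend (fst (st t)) \<noteq> wend (snd (st t))"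
    using ends[of t] t facts2[OF t] by auto
  show ?case
  proof (cases "wend (fst (st t)) = X t")
    case False
    have "\<not> (\<forall>t'<Suc t. L t' = b1)"
    proof
      assume "\<forall>t'<Suc t. L t' = b1"
      then have "snd (st t) = (b1,[],b1)" "L t = b1" using IH P by auto
      then show False using False E facts2(1)[OF t] by (auto simp: doubleton_eq_iff)
    qed
    then show ?thesis using False by (auto simp: st_Suc[OF t])
  next
    case True
    have "(\<forall>t'<Suc t. L t' = b1) \<longleftrightarrow> wsteps (snd (st t)) = []"
    proof
      assume "wsteps (snd (st t)) = []"
      then have "(\<forall>t'<t. L t' = b1)" "snd (st t) = (b1,[],b1)" using IH by auto
      moreover then have "L t = b1" using True E facts2(1)[OF t] by (auto simp: doubleton_eq_iff)
      ultimately show "\<forall>t'<Suc t. L t' = b1" using P by auto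
    qed (use IH P in auto)
    moreover have "st (Suc t) = (wappend (fst (st t)) (X t) (K t) (Y t), snd (st t))"
      using True by (simp add: st_Suc[OF t])
    ultimately show ?thesis using IH P by simp
  qed
qed

lemma direct: assumes "wend (fst (st N)) = a1" shows "is_direct C"
proof -
  have E: "{wend (fst (st N)), wend (snd (st N))} = {a1, b1}" "wend (fst (st N)) \<noteq> wend (snd (st N))"
    using ends[of N] N_pos by (auto simp: a1_def b1_def)
  then have "wend (snd (st N)) = b1" using assms by (auto simp: doubleton_eq_iff)
  then show ?thesis using assms starts[of N] by (simp add: is_direct_def wclosed_def stN)
qed


lemma form_from:
  assumes Lp: "\<forall>t<N. L t = p" and sc: "same_cycle (map (\<lambda>t. (X t, K t)) [0..<N]) W"
  shows "\<exists>p<n. p \<notin> set (map fst W) \<and> same_cycle C (map (\<lambda>(i, j). (spair i p, (j, p))) W)"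
proof -
  let ?f = "\<lambda>(i, j). (spair i p, (j, p))"
  let ?st = "map (\<lambda>t. (X t, K t)) [0..<N]"
  obtain r where r: "?st = rotate r W" using sc by (auto simp: same_cycle_def)
  have Cst: "C = map ?f ?st"
  proof (rule nth_equalityI)
    fix t assume "t < length C"
    then have t: "t < N" by simp
    have "C ! t = (S t, (K t, L t))" by (simp add: S_def K_def L_def)
    moreover have "S t = spair (X t) p"
      using facts(1,5)[OF t] Lp t unfolding X_def
      by (cases "S t") (auto simp: spair_def other_def)
    ultimately show "C ! t = map ?f ?st ! t" using t Lp by simp
  qed simp
  have "C = rotate r (map ?f W)" using Cst r by (simp add: rotate_map)
  moreover have "p < n" using Lp facts(4)[OF N_pos] N_pos by auto
  moreover have "p \<notin> set (map fst W)"
  proof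
    assume "p \<in> set (map fst W)"
    then have "p \<in> set (map fst ?st)" using r by (simp add: rotate_map[symmetric])
    then obtain t where "t < N" "p = X t" by auto
    then show False using facts2(1) Lp by auto
  qed
  ultimately show ?thesis by (auto simp: same_cycle_def)
qed

lemma ext_dir: assumes "external_lifting C W"
  shows "\<exists>p<n. p \<notin> set (map fst W) \<and> same_cycle C (map (\<lambda>(i, j). (spair i p, (j, p))) W)"
proof -
  from assms have "(wsteps (fst (st N)) = [] \<and> same_cycle (wsteps (snd (st N))) W) \<or>
      (wsteps (snd (st N)) = [] \<and> same_cycle (wsteps (fst (st N))) W)"
    by (simp add: external_lifting_def stN)
  then show ?thesis
  proof
    assume a: "wsteps (fst (st N)) = [] \<and> same_cycle (wsteps (snd (st N))) W"
    then show ?thesis using L1[of N] form_from by auto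
  next
    assume a: "wsteps (snd (st N)) = [] \<and> same_cycle (wsteps (fst (st N))) W"
    then show ?thesis using L2[of N] form_from by auto
  qed
qed

lemma dir_ext: assumes p: "p < n" "p \<notin> set (map fst W)"
  and sc: "same_cycle C (map (\<lambda>(i, j). (spair i p, (j, p))) W)"
  shows "external_lifting C W"
proof -
  let ?f = "\<lambda>(i, j). (spair i p, (j, p))"
  obtain r where r: "C = rotate r (map ?f W)" using sc by (auto simp: same_cycle_def)
  define W' where "W' = rotate r W"
  have CW: "C = map ?f W'" using r by (simp add: W'_def rotate_map)
  have len: "length W' = N" using CW by simp
  have LX: "L t = p \<and> (X t, K t) = W' ! t" if t: "t < N" for t
  proof -
    obtain i j where ij: "W' ! t = (i, j)" by (cases "W' ! t")
    have mem: "(i,j) \<in> set W'" using nth_mem[of t W'] t len ij by simp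
    then have "(i,j) \<in> set W" by (simp add: W'_def)
    then have "i \<in> fst ` set W" by (rule rev_image_eqI) simp
    then have ip: "i \<noteq> p" using p(2) by auto
    have tW: "t < length W'" using t len by simp
    have "C ! t = ?f (W' ! t)" by (subst CW) (simp add: tW)
    then have Ct: "C ! t = (spair i p, (j, p))" by (simp add: ij)
    have "L t = p" "K t = j" "S t = spair i p" using Ct by (simp_all add: L_def K_def S_def)
    then show ?thesis using other_spair[OF ip] by (simp add: X_def ij)
  qed
  have Lall: "\<forall>t<N. L t = p" using LX by blast
  have stp: "map (\<lambda>t. (X t, K t)) [0..<N] = W'"
    by (rule nth_equalityI) (use len LX in auto)
  have scW: "same_cycle W' W" unfolding same_cycle_def W'_def by blast
  have L0: "L 0 = p" using Lall N_pos by blast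
  have "p = a1 \<or> p = b1" using facts(5)[OF N_pos] unfolding L0 by (simp add: a1_def b1_def)
  then show ?thesis
  proof
    assume "p = a1"
    then have "\<forall>t'<N. L t' = a1" using Lall by simp
    then have "fst (st N) = (a1,[],a1) \<and> wsteps (snd (st N)) = map (\<lambda>t'. (X t', K t')) [0..<N]"
      by (rule mp[OF conjunct2[OF L1[OF order_refl]]])
    then have "fst (st N) = (a1,[],a1)" "wsteps (snd (st N)) = W'" using stp by simp_all
    moreover then have "is_direct C" using direct by simp
    ultimately show ?thesis using scW by (simp add: external_lifting_def stN)
  next
    assume "p = b1"
    then have "\<forall>t'<N. L t' = b1" using Lall by simp
    then have "snd (st N) = (b1,[],b1) \<and> wsteps (fst (st N)) = map (\<lambda>t'. (X t', K t')) [0..<N]"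
      by (rule mp[OF conjunct2[OF L2[OF order_refl]]])
    then have sn: "snd (st N) = (b1,[],b1)" "wsteps (fst (st N)) = W'" using stp by simp_all
    have E: "{wend (fst (st N)), wend (snd (st N))} = {a1, b1}" "wend (fst (st N)) \<noteq> wend (snd (st N))"
      using ends[of N] N_pos by (auto simp: a1_def b1_def)
    then have "wend (fst (st N)) = a1" using sn by (auto simp: doubleton_eq_iff)
    then have "is_direct C" using direct by simp
    then show ?thesis using scW sn by (simp add: external_lifting_def stN)
  qed
qed

lemma internal: assumes il: "internal_lifting C W" and s: "s \<in> set (map fst C)"
  shows "fst s \<in> set (map fst W) \<and> snd s \<in> set (map fst W)"
proof -
  obtain r where r: "wsteps (fst (st N)) @ wsteps (snd (st N)) = rotate r W" and nd: "\<not> is_direct C"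
    using il by (auto simp: internal_lifting_def same_cycle_def stN)
  have XS: "set (map fst W) = X ` {..<N}"
  proof -
    have "set (map fst W) = set (map fst (rotate r W))" by (simp add: rotate_map[symmetric])
    also have "\<dots> = X ` {..<N}" using xset[of N] unfolding r[symmetric] by auto
    finally show ?thesis .
  qed
  obtain t where t: "t < N" and st: "s = S t" using s by (auto simp: in_set_conv_nth S_def)
  have "L t \<in> X ` {..<N}"
  proof (rule ccontr)
    assume nL: "L t \<notin> X ` {..<N}"
    have D: "L ((t + d) mod N) = L t" for d
    proof (induction d)
      case 0 then show ?case using t by simp
    next
      case (Suc d)
      define u where "u = (t + d) mod N"
      have u: "u < N" using N_pos by (simp add: u_def)
      have nx: "(u + 1) mod N = (t + Suc d) mod N" by (simp add: u_def mod_Suc_eq)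
      have nxl: "(u + 1) mod N < N" using N_pos by simp
      have "L u \<in> {X ((u+1) mod N), L ((u+1) mod N)}"
        using facts(6)[OF u] facts2(2)[OF nxl] by auto
      moreover have "L u \<noteq> X ((u+1) mod N)" using Suc nL nxl u_def by auto
      ultimately show ?case using Suc nx u_def by auto
    qed
    have all: "\<forall>t'<N. L t' = L t"
    proof (intro allI impI)
      fix t' assume "t' < N"
      then have "(t + (N - t + t')) mod N = t'" using t by simp
      then show "L t' = L t" using D by metis
    qed
    have "L t = a1 \<or> L t = b1" using facts(5)[OF N_pos] all N_pos by (auto simp: a1_def b1_def)
    then show False
    proof
      assume "L t = a1"
      then have "\<forall>t'<N. L t' = a1" using all by simp
      then have "fst (st N) = (a1,[],a1)" using mp[OF conjunct2[OF L1[OF order_refl]]] by simp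
      then show False using direct nd by simp
    next
      assume "L t = b1"
      then have "\<forall>t'<N. L t' = b1" using all by simp
      then have sn: "snd (st N) = (b1,[],b1)" using mp[OF conjunct2[OF L2[OF order_refl]]] by simp
      have E: "{wend (fst (st N)), wend (snd (st N))} = {a1, b1}" "wend (fst (st N)) \<noteq> wend (snd (st N))"
        using ends[of N] N_pos by (auto simp: a1_def b1_def)
      then have "wend (fst (st N)) = a1" using sn by (auto simp: doubleton_eq_iff)
      then show False using direct nd by simp
    qed
  qed
  moreover have "X t \<in> X ` {..<N}" using t by simp
  ultimately have sub: "{X t, L t} \<subseteq> X ` {..<N}" by simp
  have eq: "{X t, L t} = {fst s, snd s}" using facts2(2)[OF t] st by simp
  have "fst s \<in> {X t, L t}" "snd s \<in> {X t, L t}" unfolding eq by simp_all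
  then have "fst s \<in> X ` {..<N}" "snd s \<in> X ` {..<N}" using sub by (meson subsetD)+
  then show ?thesis unfolding XS by simp
qed

end

theorem proposition5p5:
  fixes n m :: nat and A B :: "nat \<Rightarrow> nat \<Rightarrow> real" and W :: "(nat \<times> nat) list"
  assumes "n \<ge> 2"
    and "dsr_cycle n m A B W"
  shows "(\<forall>C. dsr2_cycle n m A B C \<longrightarrow>
            (external_lifting C W \<longleftrightarrow>
              (\<exists>p < n. p \<notin> set (map fst W) \<and>
                 same_cycle C (map (\<lambda>(i, j). (spair i p, (j, p))) W))))
       \<and> (\<forall>C. dsr2_cycle n m A B C \<and> internal_lifting C W \<longrightarrow>
            (\<forall>s \<in> set (map fst C). fst s \<in> set (map fst W) \<and> snd s \<in> set (map fst W)))"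
proof (rule conjI; intro allI impI ballI)
  fix C assume "dsr2_cycle n m A B C"
  then interpret c2 n m A B C by unfold_locales
  show "external_lifting C W \<longleftrightarrow> (\<exists>p < n. p \<notin> set (map fst W) \<and>
                 same_cycle C (map (\<lambda>(i, j). (spair i p, (j, p))) W))"
  proof
    assume "external_lifting C W" then show "\<exists>p < n. p \<notin> set (map fst W) \<and>
                 same_cycle C (map (\<lambda>(i, j). (spair i p, (j, p))) W)" by (rule ext_dir)
  next
    assume "\<exists>p < n. p \<notin> set (map fst W) \<and>
                 same_cycle C (map (\<lambda>(i, j). (spair i p, (j, p))) W)"
    then obtain p where "p < n" "p \<notin> set (map fst W)"
       "same_cycle C (map (\<lambda>(i, j). (spair i p, (j, p))) W)" by blast
    then show "external_lifting C W" by (rule dir_ext)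
  qed
next
  fix C s assume h: "dsr2_cycle n m A B C \<and> internal_lifting C W" and s: "s \<in> set (map fst C)"
  interpret c2 n m A B C using h by (simp add: c2_def)
  show "fst s \<in> set (map fst W) \<and> snd s \<in> set (map fst W)" using h s by (intro internal) simp_all
qed

end
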